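(* Let $V$ be a commutative unital quantale whose underlying lattice is a frame, with $\otimes=\wedge$ in $V$. Let $(X,a)$, $(Y,b)$ be $V$-groups with $(Y,b)$ symmetric, $\varphi\colon Y\to\mathrm{Aut}(X)$ a group action, and $c$ a $V$-category structure on $X\rtimes_\varphi Y$ such that $(X,a)\xrightarrow{\langle 1,0\rangle}(X\rtimes_\varphi Y,c)\underset{\langle 0,1\rangle}{\overset{\pi_2}{\rightleftarrows}}(Y,b)$ is a split extension in $\mathsf{VGrp}$. Then $c=a\otimes b=a\wedge b$, i.e. $c((x,y),(x',y'))=a(x,x')\wedge b(y,y')$ for all $x,x'\in X$, $y,y'\in Y$.
   Context: A commutative unital quantale $V$ is a complete lattice with a commutative associative operation $\otimes$ with unit $k$ preserving arbitrary joins in each variable; here $\otimes=\wedge$, so $k=\top$. A $V$-category $(X,a)$: $a\colon X\times X\to V$ with $k\le a(x,x)$ and $a(x,x')\otimes a(x',x'')\le a(x,x'')$; it is symmetric if $a(x,x')=a(x',x)$. A $V$-functor is a map $f$ with $a(x,x')\le b(f(x),f(x'))$. A $V$-group $(X,a,+)$ is a $V$-category with a group structure (additive, not necessarily abelian) such that $a(x_1,x_2)\otimes a(x_1',x_2')\le a(x_1+x_1',x_2+x_2')$; $V$-homomorphisms are group homomorphisms that are $V$-functors; category $\mathsf{VGrp}$ (pointed). The semidirect product $X\rtimes_\varphi Y$ is $X\times Y$ with $(x,y)+(x',y')=(x+\varphi_y(x'),y+y')$, $\varphi_y=\varphi(y)$; $\langle 1,0\rangle(x)=(x,0)$, $\langle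 0,1\rangle(y)=(0,y)$, $\pi_2(x,y)=y$. A split extension in $\mathsf{VGrp}$ means: the middle object is a $V$-group, all three maps are $V$-homomorphisms, $\pi_2\circ\langle 0,1\rangle=1_Y$, and $\langle 1,0\rangle$ is a kernel of $\pi_2$ in $\mathsf{VGrp}$. *)

theory Defs
  imports "HOL-Algebra.Bij"
begin

text \<open>V is a complete lattice with tensor = inf and unit k = top.
  Groups are HOL-Algebra groups (written multiplicatively; the paper writes them additively).\<close>

definition frame_law :: "'v::complete_lattice itself \<Rightarrow> bool" where
  "frame_law _ \<longleftrightarrow> (\<forall>(u::'v) S. inf u (Sup S) = (SUP s\<in>S. inf u s))"

definition vcat :: "'a set \<Rightarrow> ('a \<Rightarrow> 'a \<Rightarrow> 'v::complete_lattice) \<Rightarrow> bool" where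
  "vcat A a \<longleftrightarrow> (\<forall>x\<in>A. Orderings.top \<le> a x x) \<and>
     (\<forall>x\<in>A. \<forall>x'\<in>A. \<forall>x''\<in>A. inf (a x x') (a x' x'') \<le> a x x'')"

definition vsymmetric :: "'a set \<Rightarrow> ('a \<Rightarrow> 'a \<Rightarrow> 'v::complete_lattice) \<Rightarrow> bool" where
  "vsymmetric A a \<longleftrightarrow> (\<forall>x\<in>A. \<forall>x'\<in>A. a x x' = a x' x)"

definition vgroup :: "('a, 'm) monoid_scheme \<Rightarrow> ('a \<Rightarrow> 'a \<Rightarrow> 'v::complete_lattice) \<Rightarrow> bool" where
  "vgroup G a \<longleftrightarrow> group G \<and> vcat (carrier G) a \<and>
     (\<forall>x1\<in>carrier G. \<forall>x2\<in>carrier G. \<forall>x1'\<in>carrier G. \<forall>x2'\<in>carrier G.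
        inf (a x1 x2) (a x1' x2') \<le> a (x1 \<otimes>\<^bsub>G\<^esub> x1') (x2 \<otimes>\<^bsub>G\<^esub> x2'))"

definition vhom :: "('a, 'm) monoid_scheme \<Rightarrow> ('a \<Rightarrow> 'a \<Rightarrow> 'v::complete_lattice)
    \<Rightarrow> ('b, 'n) monoid_scheme \<Rightarrow> ('b \<Rightarrow> 'b \<Rightarrow> 'v) \<Rightarrow> ('a \<Rightarrow> 'b) \<Rightarrow> bool" where
  "vhom G a H b f \<longleftrightarrow> f \<in> hom G H \<and>
     (\<forall>x\<in>carrier G. \<forall>x'\<in>carrier G. a x x' \<le> b (f x) (f x'))"

definition sdprod :: "('x, 'm) monoid_scheme \<Rightarrow> ('y, 'n) monoid_scheme \<Rightarrow> ('y \<Rightarrow> 'x \<Rightarrow> 'x)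
    \<Rightarrow> ('x \<times> 'y) monoid" where
  "sdprod X Y \<phi> = \<lparr>carrier = carrier X \<times> carrier Y,
     mult = (\<lambda>(x, y) (x', y'). (x \<otimes>\<^bsub>X\<^esub> \<phi> y x', y \<otimes>\<^bsub>Y\<^esub> y')),
     one = (\<one>\<^bsub>X\<^esub>, \<one>\<^bsub>Y\<^esub>)\<rparr>"

text \<open>k : (K,e) \<rightarrow> (M,c) is a kernel of p : (M,c) \<rightarrow> (Q,d) in VGrp (pointed category; zero
  morphisms are the constant-unit maps). Test objects range over V-groups whose elements live in
  the element type of M (HOL cannot quantify over all types inside a formula).\<close>
definition is_kernel_VGrp ::
  "('k, 'm1) monoid_scheme \<Rightarrow> ('k \<Rightarrow> 'k \<Rightarrow> 'v::complete_lattice)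
   \<Rightarrow> ('a, 'm2) monoid_scheme \<Rightarrow> ('a \<Rightarrow> 'a \<Rightarrow> 'v)
   \<Rightarrow> ('q, 'm3) monoid_scheme \<Rightarrow> ('q \<Rightarrow> 'q \<Rightarrow> 'v)
   \<Rightarrow> ('k \<Rightarrow> 'a) \<Rightarrow> ('a \<Rightarrow> 'q) \<Rightarrow> bool" where
  "is_kernel_VGrp K e M c Q d k p \<longleftrightarrow>
     (\<forall>x\<in>carrier K. p (k x) = \<one>\<^bsub>Q\<^esub>) \<and>
     (\<forall>(Z :: 'a monoid) (dz :: 'a \<Rightarrow> 'a \<Rightarrow> 'v) f.
        vgroup Z dz \<and> vhom Z dz M c f \<and> (\<forall>z\<in>carrier Z. p (f z) = \<one>\<^bsub>Q\<^esub>) \<longrightarrow>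
          (\<exists>g. vhom Z dz K e g \<and> (\<forall>z\<in>carrier Z. k (g z) = f z)) \<and>
          (\<forall>g g'. vhom Z dz K e g \<and> (\<forall>z\<in>carrier Z. k (g z) = f z) \<and>
                  vhom Z dz K e g' \<and> (\<forall>z\<in>carrier Z. k (g' z) = f z)
                  \<longrightarrow> (\<forall>z\<in>carrier Z. g z = g' z)))"

end

theory Submission
  imports Defs
begin

theorem proposition7p7:
  fixes X :: "('x, 'mx) monoid_scheme" and Y :: "('y, 'my) monoid_scheme"
    and a :: "'x \<Rightarrow> 'x \<Rightarrow> 'v::complete_lattice" and b :: "'y \<Rightarrow> 'y \<Rightarrow> 'v"
    and c :: "'x \<times> 'y \<Rightarrow> 'x \<times> 'y \<Rightarrow> 'v"
    and \<phi> :: "'y \<Rightarrow> 'x \<Rightarrow> 'x"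
  assumes frame: "frame_law TYPE('v)"
    and X: "vgroup X a" and Y: "vgroup Y b" and Ysym: "vsymmetric (carrier Y) b"
    and action: "\<phi> \<in> hom Y (AutoGroup X)"
    and M: "vgroup (sdprod X Y \<phi>) c"
    and i1: "vhom X a (sdprod X Y \<phi>) c (\<lambda>x. (x, \<one>\<^bsub>Y\<^esub>))"
    and i2: "vhom Y b (sdprod X Y \<phi>) c (\<lambda>y. (\<one>\<^bsub>X\<^esub>, y))"
    and p2: "vhom (sdprod X Y \<phi>) c Y b snd"
    and split: "\<forall>y\<in>carrier Y. snd (\<one>\<^bsub>X\<^esub>, y) = y"
    and kernel: "is_kernel_VGrp X a (sdprod X Y \<phi>) c Y b (\<lambda>x. (x, \<one>\<^bsub>Y\<^esub>)) snd"
  shows "\<forall>x\<in>carrier X. \<forall>x'\<in>carrier X. \<forall>y\<in>carrier Y. \<forall>y'\<in>carrier Y.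
           c (x, y) (x', y') = inf (a x x') (b y y')"
proof -
  let ?M = "sdprod X Y \<phi>"
  have gX: "group X" using X by (simp add: vgroup_def)
  have gY: "group Y" using Y by (simp add: vgroup_def)
  interpret GX: group X by (rule gX)
  interpret GY: group Y by (rule gY)
  have gA: "group (AutoGroup X)" by (rule GX.AutoGroup)
  have phi1: "\<phi> \<one>\<^bsub>Y\<^esub> = (\<lambda>x\<in>carrier X. x)"
    using hom_one[OF action gY gA] by (simp add: AutoGroup_def BijGroup_def)
  have phiauto: "\<phi> y \<in> hom X X" if "y \<in> carrier Y" for y
  proof -
    have "\<phi> y \<in> carrier (AutoGroup X)" using action that unfolding hom_def by blast
    then show ?thesis by (simp add: AutoGroup_def BijGroup_def auto_def)
  qed
  have phiy1: "\<phi> y \<one>\<^bsub>X\<^esub> = \<one>\<^bsub>X\<^esub>" if "y \<in> carrier Y" for y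
    using hom_one[OF phiauto[OF that] gX gX] .
  have multM: "(x, y) \<otimes>\<^bsub>?M\<^esub> (x', y') = (x \<otimes>\<^bsub>X\<^esub> \<phi> y x', y \<otimes>\<^bsub>Y\<^esub> y')" for x y x' y'
    by (simp add: sdprod_def)
  have cM: "carrier ?M = carrier X \<times> carrier Y" by (simp add: sdprod_def)
  have Mmono: "inf (c p1 p2) (c q1 q2) \<le> c (p1 \<otimes>\<^bsub>?M\<^esub> q1) (p2 \<otimes>\<^bsub>?M\<^esub> q2)"
    if "p1 \<in> carrier ?M" "p2 \<in> carrier ?M" "q1 \<in> carrier ?M" "q2 \<in> carrier ?M" for p1 p2 q1 q2
    using M that unfolding vgroup_def by blast
  have Mcat: "vcat (carrier ?M) c" using M by (simp add: vgroup_def)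
  define Z :: "('x \<times> 'y) monoid" where
    "Z = \<lparr>carrier = carrier X \<times> {\<one>\<^bsub>Y\<^esub>}, mult = mult ?M, one = (\<one>\<^bsub>X\<^esub>, \<one>\<^bsub>Y\<^esub>)\<rparr>"
  have multZ: "(x, \<one>\<^bsub>Y\<^esub>) \<otimes>\<^bsub>Z\<^esub> (x', \<one>\<^bsub>Y\<^esub>) = (x \<otimes>\<^bsub>X\<^esub> x', \<one>\<^bsub>Y\<^esub>)"
    if "x' \<in> carrier X" for x x'
    using that by (simp add: Z_def multM phi1)
  have cZ: "carrier Z = carrier X \<times> {\<one>\<^bsub>Y\<^esub>}" by (simp add: Z_def)
  have oneZ: "\<one>\<^bsub>Z\<^esub> = (\<one>\<^bsub>X\<^esub>, \<one>\<^bsub>Y\<^esub>)" by (simp add: Z_def)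
  have gZ: "group Z"
  proof (rule groupI)
    fix p q assume "p \<in> carrier Z" "q \<in> carrier Z"
    then show "p \<otimes>\<^bsub>Z\<^esub> q \<in> carrier Z" by (auto simp: cZ multZ)
  next
    show "\<one>\<^bsub>Z\<^esub> \<in> carrier Z" by (simp add: cZ oneZ)
  next
    fix p q r assume "p \<in> carrier Z" "q \<in> carrier Z" "r \<in> carrier Z"
    then show "p \<otimes>\<^bsub>Z\<^esub> q \<otimes>\<^bsub>Z\<^esub> r = p \<otimes>\<^bsub>Z\<^esub> (q \<otimes>\<^bsub>Z\<^esub> r)"
      by (auto simp: cZ multZ GX.m_assoc)
  next
    fix p assume "p \<in> carrier Z"
    then show "\<one>\<^bsub>Z\<^esub> \<otimes>\<^bsub>Z\<^esub> p = p" by (auto simp: cZ multZ oneZ)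
  next
    fix p assume "p \<in> carrier Z"
    then obtain x where p: "p = (x, \<one>\<^bsub>Y\<^esub>)" "x \<in> carrier X" by (auto simp: cZ)
    show "\<exists>q\<in>carrier Z. q \<otimes>\<^bsub>Z\<^esub> p = \<one>\<^bsub>Z\<^esub>"
      by (rule bexI[of _ "(inv\<^bsub>X\<^esub> x, \<one>\<^bsub>Y\<^esub>)"]) (use p in \<open>auto simp: cZ multZ oneZ\<close>)
  qed
  have ZsubM: "carrier Z \<subseteq> carrier ?M" by (auto simp: cZ cM)
  have vZ: "vgroup Z c"
    unfolding vgroup_def
  proof (intro conjI ballI)
    show "group Z" by (rule gZ)
    show "vcat (carrier Z) c" using Mcat ZsubM unfolding vcat_def by blast
  next
    fix x1 x2 x1' x2' assume h: "x1 \<in> carrier Z" "x2 \<in> carrier Z" "x1' \<in> carrier Z" "x2' \<in> carrier Z"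
    have "mult Z = mult ?M" by (simp add: Z_def)
    then show "inf (c x1 x2) (c x1' x2') \<le> c (x1 \<otimes>\<^bsub>Z\<^esub> x1') (x2 \<otimes>\<^bsub>Z\<^esub> x2')"
      using Mmono[of x1 x2 x1' x2'] h ZsubM by auto
  qed
  have hZ: "vhom Z c ?M c id"
    unfolding vhom_def
  proof (intro conjI ballI)
    show "id \<in> hom Z ?M"
      unfolding hom_def
    proof (intro CollectI conjI ballI)
      show "id \<in> carrier Z \<rightarrow> carrier ?M" using ZsubM by auto
    next
      fix p q assume "p \<in> carrier Z" "q \<in> carrier Z"
      then show "id (p \<otimes>\<^bsub>Z\<^esub> q) = id p \<otimes>\<^bsub>?M\<^esub> id q" by (simp add: Z_def)
    qed
  qed simp
  have pZ: "\<forall>z\<in>carrier Z. snd (id z) = \<one>\<^bsub>Y\<^esub>" by (auto simp: cZ)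
  obtain g where g: "vhom Z c X a g" "\<forall>z\<in>carrier Z. (g z, \<one>\<^bsub>Y\<^esub>) = id z"
    using kernel vZ hZ pZ unfolding is_kernel_VGrp_def by blast
  have cXa: "c (x, \<one>\<^bsub>Y\<^esub>) (x', \<one>\<^bsub>Y\<^esub>) = a x x'" if "x \<in> carrier X" "x' \<in> carrier X" for x x'
  proof (rule antisym)
    have "g (x, \<one>\<^bsub>Y\<^esub>) = x" "g (x', \<one>\<^bsub>Y\<^esub>) = x'" using g(2) that by (auto simp: cZ)
    moreover have "c (x, \<one>\<^bsub>Y\<^esub>) (x', \<one>\<^bsub>Y\<^esub>) \<le> a (g (x, \<one>\<^bsub>Y\<^esub>)) (g (x', \<one>\<^bsub>Y\<^esub>))"
      using g(1) that unfolding vhom_def by (auto simp: cZ)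
    ultimately show "c (x, \<one>\<^bsub>Y\<^esub>) (x', \<one>\<^bsub>Y\<^esub>) \<le> a x x'" by simp
    show "a x x' \<le> c (x, \<one>\<^bsub>Y\<^esub>) (x', \<one>\<^bsub>Y\<^esub>)" using i1 that unfolding vhom_def by blast
  qed
  have Yrefl: "Orderings.top \<le> b y y" if "y \<in> carrier Y" for y using Y that unfolding vgroup_def vcat_def by blast
  have Ymono: "inf (b y1 y2) (b y1' y2') \<le> b (y1 \<otimes>\<^bsub>Y\<^esub> y1') (y2 \<otimes>\<^bsub>Y\<^esub> y2')"
    if "y1 \<in> carrier Y" "y2 \<in> carrier Y" "y1' \<in> carrier Y" "y2' \<in> carrier Y" for y1 y2 y1' y2'
    using Y that unfolding vgroup_def by blast
  have binv: "b y y' \<le> b (inv\<^bsub>Y\<^esub> y) (inv\<^bsub>Y\<^esub> y')" if y: "y \<in> carrier Y" "y' \<in> carrier Y" for y y'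
  proof -
    have t1: "b (inv\<^bsub>Y\<^esub> y) (inv\<^bsub>Y\<^esub> y) = Orderings.top" using Yrefl y by (simp add: top_unique)
    have t2: "b (inv\<^bsub>Y\<^esub> y') (inv\<^bsub>Y\<^esub> y') = Orderings.top" using Yrefl y by (simp add: top_unique)
    have "b y y' = inf (b (inv\<^bsub>Y\<^esub> y) (inv\<^bsub>Y\<^esub> y)) (b y y')" by (simp add: t1)
    also have "\<dots> \<le> b \<one>\<^bsub>Y\<^esub> (inv\<^bsub>Y\<^esub> y \<otimes>\<^bsub>Y\<^esub> y')"
      using Ymono[of "inv\<^bsub>Y\<^esub> y" "inv\<^bsub>Y\<^esub> y" y y'] y by simp
    also have "\<dots> = inf (b \<one>\<^bsub>Y\<^esub> (inv\<^bsub>Y\<^esub> y \<otimes>\<^bsub>Y\<^esub> y')) (b (inv\<^bsub>Y\<^esub> y') (inv\<^bsub>Y\<^esub> y'))"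
      by (simp add: t2)
    also have "\<dots> \<le> b (\<one>\<^bsub>Y\<^esub> \<otimes>\<^bsub>Y\<^esub> inv\<^bsub>Y\<^esub> y') (inv\<^bsub>Y\<^esub> y \<otimes>\<^bsub>Y\<^esub> y' \<otimes>\<^bsub>Y\<^esub> inv\<^bsub>Y\<^esub> y')"
      using Ymono[of "\<one>\<^bsub>Y\<^esub>" "inv\<^bsub>Y\<^esub> y \<otimes>\<^bsub>Y\<^esub> y'" "inv\<^bsub>Y\<^esub> y'" "inv\<^bsub>Y\<^esub> y'"] y by simp
    also have "\<dots> = b (inv\<^bsub>Y\<^esub> y') (inv\<^bsub>Y\<^esub> y)"
      using y by (simp add: GY.m_assoc)
    also have "\<dots> = b (inv\<^bsub>Y\<^esub> y) (inv\<^bsub>Y\<^esub> y')"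
      using Ysym y unfolding vsymmetric_def by simp
    finally show ?thesis .
  qed
  show ?thesis
  proof (intro ballI)
    fix x x' y y' assume h: "x \<in> carrier X" "x' \<in> carrier X" "y \<in> carrier Y" "y' \<in> carrier Y"
    show "c (x, y) (x', y') = inf (a x x') (b y y')"
    proof (rule antisym)
      have cb: "c (x, y) (x', y') \<le> b y y'" using p2 h unfolding vhom_def by (auto simp: cM)
      have "b y y' \<le> b (inv\<^bsub>Y\<^esub> y) (inv\<^bsub>Y\<^esub> y')" using binv h by blast
      also have "\<dots> \<le> c (\<one>\<^bsub>X\<^esub>, inv\<^bsub>Y\<^esub> y) (\<one>\<^bsub>X\<^esub>, inv\<^bsub>Y\<^esub> y')"
        using i2 h unfolding vhom_def by simp
      finally have c2: "c (x, y) (x', y') \<le> c (\<one>\<^bsub>X\<^esub>, inv\<^bsub>Y\<^esub> y) (\<one>\<^bsub>X\<^esub>, inv\<^bsub>Y\<^esub> y')"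
        using cb by simp
      have "c (x, y) (x', y') = inf (c (x, y) (x', y')) (c (\<one>\<^bsub>X\<^esub>, inv\<^bsub>Y\<^esub> y) (\<one>\<^bsub>X\<^esub>, inv\<^bsub>Y\<^esub> y'))"
        using c2 by (simp add: inf_absorb1)
      also have "\<dots> \<le> c ((x, y) \<otimes>\<^bsub>?M\<^esub> (\<one>\<^bsub>X\<^esub>, inv\<^bsub>Y\<^esub> y)) ((x', y') \<otimes>\<^bsub>?M\<^esub> (\<one>\<^bsub>X\<^esub>, inv\<^bsub>Y\<^esub> y'))"
        using Mmono h by (simp add: cM)
      also have "\<dots> = c (x, \<one>\<^bsub>Y\<^esub>) (x', \<one>\<^bsub>Y\<^esub>)"
        using h by (simp add: multM phiy1)
      also have "\<dots> = a x x'" using cXa h by simp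
      finally show "c (x, y) (x', y') \<le> inf (a x x') (b y y')" using cb by simp
    next
      have "inf (a x x') (b y y') \<le> inf (c (x, \<one>\<^bsub>Y\<^esub>) (x', \<one>\<^bsub>Y\<^esub>)) (c (\<one>\<^bsub>X\<^esub>, y) (\<one>\<^bsub>X\<^esub>, y'))"
        using i1 i2 h unfolding vhom_def by (meson inf_mono)
      also have "\<dots> \<le> c ((x, \<one>\<^bsub>Y\<^esub>) \<otimes>\<^bsub>?M\<^esub> (\<one>\<^bsub>X\<^esub>, y)) ((x', \<one>\<^bsub>Y\<^esub>) \<otimes>\<^bsub>?M\<^esub> (\<one>\<^bsub>X\<^esub>, y'))"
        using Mmono h by (simp add: cM)
      also have "\<dots> = c (x, y) (x', y')"
        using h by (simp add: multM phiy1)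
      finally show "inf (a x x') (b y y') \<le> c (x, y) (x', y')" .
    qed
  qed
qed

end
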